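(* Let $C$ be a real $n\times n$ matrix with nonnegative entries that is nilpotent. Then for each $\varepsilon>0$ there exist a diagonal matrix $A$ with nonnegative entries and a matrix $B$ with nonnegative entries such that $C=AB-BA$ and $BA\leq\varepsilon C$ (entrywise).
   Context: Real $n\times n$ matrices are ordered entrywise: $X\leq Y$ means $x_{ij}\leq y_{ij}$ for all $i,j$; a matrix is positive if all its entries are nonnegative. *)

theory Defs
  imports "HOL-Analysis.Analysis"
begin

primrec matrix_pow :: "real ^ 'n ^ 'n \<Rightarrow> nat \<Rightarrow> real ^ 'n ^ 'n" where
  "matrix_pow M 0 = mat 1"
| "matrix_pow M (Suc k) = M ** matrix_pow M k"

definition nilpotent_matrix :: "real ^ 'n ^ 'n \<Rightarrow> bool" where
  "nilpotent_matrix M \<longleftrightarrow> (\<exists>k. matrix_pow M k = 0)"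

definition diagonal_matrix :: "real ^ 'n ^ 'n \<Rightarrow> bool" where
  "diagonal_matrix M \<longleftrightarrow> (\<forall>i j. i \<noteq> j \<longrightarrow> M $ i $ j = 0)"

definition nonneg_matrix :: "real ^ 'n ^ 'n \<Rightarrow> bool" where
  "nonneg_matrix M \<longleftrightarrow> (\<forall>i j. 0 \<le> M $ i $ j)"

definition entrywise_le :: "real ^ 'n ^ 'n \<Rightarrow> real ^ 'n ^ 'n \<Rightarrow> bool" where
  "entrywise_le X Y \<longleftrightarrow> (\<forall>i j. X $ i $ j \<le> Y $ i $ j)"

end

theory Submission
  imports Defs
begin

lemma pow_nonneg:
  assumes "nonneg_matrix C"
  shows "0 \<le> matrix_pow C k $ i $ j"
  using assms
proof (induction k arbitrary: i j)
  case 0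
  then show ?case by (simp add: mat_def)
next
  case (Suc k)
  then show ?case
    by (auto simp: matrix_matrix_mult_def nonneg_matrix_def intro!: sum_nonneg mult_nonneg_nonneg)
qed

lemma pow_add: "matrix_pow C (k + N) = matrix_pow C k ** matrix_pow C N"
  by (induction k) (auto simp: matrix_mul_assoc)

lemma pow_pos:
  assumes "nonneg_matrix C" "C $ i $ j > 0" "matrix_pow C k $ j $ l \<noteq> 0"
  shows "matrix_pow C (Suc k) $ i $ l \<noteq> 0"
proof -
  have nn: "\<And>m. 0 \<le> C $ i $ m * matrix_pow C k $ m $ l"
    using assms(1) pow_nonneg[OF assms(1)] by (simp add: nonneg_matrix_def)
  have "0 < C $ i $ j * matrix_pow C k $ j $ l"
    using assms pow_nonneg[OF assms(1), of k j l] by (simp add: order_le_neq_trans)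
  also have "\<dots> \<le> (\<Sum>m\<in>UNIV. C $ i $ m * matrix_pow C k $ m $ l)"
    by (rule member_le_sum) (use nn in auto)
  finally show ?thesis by (simp add: matrix_matrix_mult_def)
qed

theorem proposition4p2:
  fixes C :: "real ^ 'n ^ 'n" and \<epsilon> :: real
  assumes "nonneg_matrix C" and "nilpotent_matrix C" and "\<epsilon> > 0"
  shows "\<exists>A B :: real ^ 'n ^ 'n. diagonal_matrix A \<and> nonneg_matrix A \<and> nonneg_matrix B
           \<and> C = A ** B - B ** A \<and> entrywise_le (B ** A) (\<epsilon> *\<^sub>R C)"
proof -
  obtain N where N: "matrix_pow C N = 0" using assms(2) unfolding nilpotent_matrix_def by blast
  define S where "S i = {k. \<exists>l. matrix_pow C k $ i $ l \<noteq> 0}" for i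
  have Ssub: "S i \<subseteq> {..<N}" for i
  proof
    fix k assume "k \<in> S i"
    then obtain l where l: "matrix_pow C k $ i $ l \<noteq> 0" unfolding S_def by blast
    show "k \<in> {..<N}"
    proof (rule ccontr)
      assume "k \<notin> {..<N}"
      then have "k = (k - N) + N" by simp
      then have "matrix_pow C k = 0" using N pow_add[of C "k - N" N] by simp
      with l show False by simp
    qed
  qed
  have finS: "finite (S i)" for i using Ssub finite_subset by blast
  define h where "h i = card (S i)" for i
  have hlt: "h j < h i" if "C $ i $ j > 0" for i j
  proof -
    have "insert 0 (Suc ` S j) \<subseteq> S i"
    proof
      fix k assume "k \<in> insert 0 (Suc ` S j)"
      then show "k \<in> S i"
      proof
        assume "k = 0" then show ?thesis unfolding S_def by (auto intro!: exI[of _ i] simp: mat_def)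
      next
        assume "k \<in> Suc ` S j"
        then obtain m l where "k = Suc m" "matrix_pow C m $ j $ l \<noteq> 0" unfolding S_def by blast
        then show ?thesis using pow_pos[OF assms(1) that] unfolding S_def by blast
      qed
    qed
    then have "card (insert 0 (Suc ` S j)) \<le> card (S i)" using finS card_mono by blast
    moreover have "card (insert 0 (Suc ` S j)) = Suc (card (S j))"
      using finS by (simp add: card_image)
    ultimately show ?thesis unfolding h_def by simp
  qed
  define r where "r = 1 + 1 / \<epsilon>"
  have r1: "r > 1" using assms(3) by (simp add: r_def)
  define a where "a i = r ^ h i" for i
  have apos: "a i > 0" for i using r1 by (simp add: a_def)
  have agr: "a i \<ge> r * a j" if "C $ i $ j > 0" for i j
  proof -
    have "r * a j = r ^ Suc (h j)" by (simp add: a_def)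
    also have "\<dots> \<le> r ^ h i" using hlt[OF that] r1 by (intro power_increasing) auto
    finally show ?thesis by (simp add: a_def)
  qed
  define A :: "real ^ 'n ^ 'n" where "A = (\<chi> i j. if i = j then a i else 0)"
  define B :: "real ^ 'n ^ 'n" where "B = (\<chi> i j. if C $ i $ j = 0 then 0 else C $ i $ j / (a i - a j))"
  have AB: "(A ** B) $ i $ j = a i * B $ i $ j" for i j
  proof -
    have "(A ** B) $ i $ j = (\<Sum>k\<in>UNIV. if i = k then a i * B $ i $ j else 0)"
      unfolding matrix_matrix_mult_def A_def by (simp only: vec_lambda_beta, rule sum.cong) auto
    then show ?thesis by simp
  qed
  have BA: "(B ** A) $ i $ j = B $ i $ j * a j" for i j
  proof -
    have "(B ** A) $ i $ j = (\<Sum>k\<in>UNIV. if k = j then B $ i $ j * a j else 0)"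
      unfolding matrix_matrix_mult_def A_def by (simp only: vec_lambda_beta, rule sum.cong) auto
    then show ?thesis by simp
  qed
  have Cnn: "0 \<le> C $ i $ j" for i j using assms(1) by (simp add: nonneg_matrix_def)
  have key: "C $ i $ j > 0 \<Longrightarrow> a i - a j \<ge> a j / \<epsilon> \<and> a j / \<epsilon> > 0" for i j
    using agr[of i j] apos[of j] assms(3) by (auto simp: r_def algebra_simps)
  show ?thesis
  proof (intro exI conjI)
    show "diagonal_matrix A" by (simp add: diagonal_matrix_def A_def)
    show "nonneg_matrix A" using apos by (simp add: nonneg_matrix_def A_def less_imp_le)
    show "nonneg_matrix B" unfolding nonneg_matrix_def B_def
    proof (intro allI)
      fix i j
      show "0 \<le> (\<chi> i j. if C $ i $ j = 0 then 0 else C $ i $ j / (a i - a j)) $ i $ j"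
      proof (cases "C $ i $ j = 0")
        case False then have "C $ i $ j > 0" using Cnn[of i j] by simp
        then show ?thesis using key[of i j] Cnn[of i j] by simp
      qed simp
    qed
    show "C = A ** B - B ** A"
    proof (intro vec_eq_iff[THEN iffD2] allI)
      fix i j
      show "C $ i $ j = (A ** B - B ** A) $ i $ j"
      proof (cases "C $ i $ j = 0")
        case False then have "C $ i $ j > 0" using Cnn[of i j] by simp
        then have "a i - a j > 0" using key[of i j] by linarith
        have "a i * x - x * a j = (a i - a j) * x" for x by (simp add: algebra_simps)
        moreover have "(A ** B - B ** A) $ i $ j = a i * B $ i $ j - B $ i $ j * a j" by (simp add: AB BA)
        moreover have "B $ i $ j = C $ i $ j / (a i - a j)" using False by (simp add: B_def)
        ultimately have "(A ** B - B ** A) $ i $ j = (a i - a j) * (C $ i $ j / (a i - a j))" by metis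
        also have "\<dots> = C $ i $ j" using \<open>a i - a j > 0\<close> by simp
        finally show ?thesis by simp
      qed (simp add: AB BA, simp add: B_def)
    qed
    show "entrywise_le (B ** A) (\<epsilon> *\<^sub>R C)" unfolding entrywise_le_def
    proof (intro allI)
      fix i j
      show "(B ** A) $ i $ j \<le> (\<epsilon> *\<^sub>R C) $ i $ j"
      proof (cases "C $ i $ j = 0")
        case False then have c: "C $ i $ j > 0" using Cnn[of i j] by simp
        then have k: "a i - a j \<ge> a j / \<epsilon>" "a j / \<epsilon> > 0" using key[of i j] by auto
        have "a j \<le> \<epsilon> * (a i - a j)" using k assms(3) by (simp add: field_simps)
        moreover have "a i - a j > 0" using k by linarith
        ultimately have "a j / (a i - a j) \<le> \<epsilon>" by (simp add: divide_le_eq mult.commute)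
        then have "C $ i $ j * (a j / (a i - a j)) \<le> C $ i $ j * \<epsilon>"
          using c by (intro mult_left_mono) auto
        then show ?thesis using False unfolding BA by (simp add: B_def mult.commute)
      qed (simp add: BA, simp add: B_def)
    qed
  qed
qed

end
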